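(* Let $X_1,X_2,\dots$ be i.i.d. with $\mathbf{E}X_1=-a<0$ and $\mathrm{Var}(X_1)<\infty$. Then for every $\varepsilon>0$ there exists $C>0$ such that \[ \liminf_{x\to\infty}\frac{\mathbf{P}(A_\tau>x)}{\overline F(\sqrt{2ax}+Cx^{1/4+\varepsilon})}\ge\mathbf{E}\tau. \]
   Context: $S_0=0$, $S_n=X_1+\dots+X_n$, $\overline F(x)=\mathbf{P}(X_1>x)$, $\tau=\min\{n\ge1:S_n\le0\}$, $A_\tau=\sum_{k=0}^{\tau-1}S_k$. *)

theory Defs
  imports "HOL-Probability.Probability"
begin

definition S :: "(nat \<Rightarrow> 'a \<Rightarrow> real) \<Rightarrow> nat \<Rightarrow> 'a \<Rightarrow> real" where
  "S X n \<omega> = (\<Sum>i\<in>{1..n}. X i \<omega>)"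

definition tau :: "(nat \<Rightarrow> 'a \<Rightarrow> real) \<Rightarrow> 'a \<Rightarrow> enat" where
  "tau X \<omega> = (if \<exists>n\<ge>1. S X n \<omega> \<le> 0
               then enat (LEAST n. n \<ge> 1 \<and> S X n \<omega> \<le> 0) else \<infinity>)"

definition A_tau :: "(nat \<Rightarrow> 'a \<Rightarrow> real) \<Rightarrow> 'a \<Rightarrow> real" where
  "A_tau X \<omega> = (case tau X \<omega> of enat t \<Rightarrow> (\<Sum>k<t. S X k \<omega>) | \<infinity> \<Rightarrow> 0)"

definition Fbar :: "'a measure \<Rightarrow> (nat \<Rightarrow> 'a \<Rightarrow> real) \<Rightarrow> real \<Rightarrow> real" where
  "Fbar M X y = measure M {\<omega> \<in> space M. X 1 \<omega> > y}"

end

theory Submission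
  imports Defs
begin


locale walk = prob_space M for M :: "'a measure" +
  fixes X :: "nat \<Rightarrow> 'a \<Rightarrow> real" and a :: real
  assumes Xm: "\<And>i. i \<ge> 1 \<Longrightarrow> X i \<in> borel_measurable M"
    and ind: "indep_vars (\<lambda>_. borel) X {1..}"
    and ident: "\<And>i. i \<ge> 1 \<Longrightarrow> distr M borel (X i) = distr M borel (X 1)"
    and int1: "integrable M (X 1)"
    and apos: "a > 0"
    and mean: "(\<integral>\<omega>. X 1 \<omega> \<partial>M) = - a"
    and int2: "integrable M (\<lambda>\<omega>. (X 1 \<omega>)\<^sup>2)"
begin

lemma transfer_integrable:
  fixes f :: "real \<Rightarrow> real"
  assumes "i \<ge> 1" "f \<in> borel_measurable borel"
  shows "integrable M (\<lambda>\<omega>. f (X i \<omega>)) \<longleftrightarrow> integrable M (\<lambda>\<omega>. f (X 1 \<omega>))"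
proof -
  have "integrable M (\<lambda>\<omega>. f (X i \<omega>)) \<longleftrightarrow> integrable (distr M borel (X i)) f"
    using assms Xm by (subst integrable_distr_eq) auto
  also have "\<dots> \<longleftrightarrow> integrable (distr M borel (X 1)) f" using ident[OF assms(1)] by simp
  also have "\<dots> \<longleftrightarrow> integrable M (\<lambda>\<omega>. f (X 1 \<omega>))"
    using assms Xm by (subst integrable_distr_eq) auto
  finally show ?thesis .
qed

lemma transfer_integral:
  fixes f :: "real \<Rightarrow> real"
  assumes "i \<ge> 1" "f \<in> borel_measurable borel"
  shows "(\<integral>\<omega>. f (X i \<omega>) \<partial>M) = (\<integral>\<omega>. f (X 1 \<omega>) \<partial>M)"
proof -
  have "(\<integral>\<omega>. f (X i \<omega>) \<partial>M) = (\<integral>\<omega>. f \<omega> \<partial>distr M borel (X i))"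
    using assms Xm by (subst integral_distr) auto
  also have "\<dots> = (\<integral>\<omega>. f \<omega> \<partial>distr M borel (X 1))" using ident[OF assms(1)] by simp
  also have "\<dots> = (\<integral>\<omega>. f (X 1 \<omega>) \<partial>M)"
    using assms Xm by (subst integral_distr) auto
  finally show ?thesis .
qed

lemma transfer_prob:
  assumes "i \<ge> 1"
  shows "prob {\<omega>\<in>space M. X i \<omega> > y} = prob {\<omega>\<in>space M. X 1 \<omega> > y}"
proof -
  have "prob {\<omega>\<in>space M. X i \<omega> > y} = measure (distr M borel (X i)) {y<..}"
    using assms Xm by (subst measure_distr) (auto intro!: arg_cong[where f=prob])
  also have "\<dots> = measure (distr M borel (X 1)) {y<..}" using ident[OF assms(1)] by simp
  also have "\<dots> = prob {\<omega>\<in>space M. X 1 \<omega> > y}"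
    using assms Xm by (subst measure_distr) (auto intro!: arg_cong[where f=prob])
  finally show ?thesis .
qed

definition Y :: "nat \<Rightarrow> 'a \<Rightarrow> real" where "Y i \<omega> = X i \<omega> + a"
definition v :: real where "v = (\<integral>\<omega>. (X 1 \<omega> + a)\<^sup>2 \<partial>M)"

lemma Ym[measurable]: "i \<ge> 1 \<Longrightarrow> Y i \<in> borel_measurable M"
  unfolding Y_def using Xm by measurable

lemma Y_int: "i \<ge> 1 \<Longrightarrow> integrable M (Y i)"
proof -
  assume i: "i \<ge> 1"
  have "integrable M (\<lambda>\<omega>. X 1 \<omega> + a)" using int1 by simp
  then show ?thesis unfolding Y_def using transfer_integrable[OF i, of "\<lambda>x. x + a"] by simp
qed

lemma Y_mean: "i \<ge> 1 \<Longrightarrow> (\<integral>\<omega>. Y i \<omega> \<partial>M) = 0"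
proof -
  assume i: "i \<ge> 1"
  have "(\<integral>\<omega>. Y i \<omega> \<partial>M) = (\<integral>\<omega>. X 1 \<omega> + a \<partial>M)"
    unfolding Y_def using transfer_integral[OF i, of "\<lambda>x. x + a"] by simp
  also have "\<dots> = 0" using int1 mean prob_space by simp
  finally show ?thesis .
qed

lemma Y2_int: "i \<ge> 1 \<Longrightarrow> integrable M (\<lambda>\<omega>. (Y i \<omega>)\<^sup>2)"
proof -
  assume i: "i \<ge> 1"
  have "integrable M (\<lambda>\<omega>. (X 1 \<omega>)\<^sup>2 + 2 * a * X 1 \<omega> + a\<^sup>2)" using int1 int2 by simp
  also have "(\<lambda>\<omega>. (X 1 \<omega>)\<^sup>2 + 2 * a * X 1 \<omega> + a\<^sup>2) = (\<lambda>\<omega>. (X 1 \<omega> + a)\<^sup>2)"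
    by (auto simp: power2_eq_square algebra_simps)
  finally show ?thesis unfolding Y_def using transfer_integrable[OF i, of "\<lambda>x. (x + a)\<^sup>2"] by simp
qed

lemma Y2_mean: "i \<ge> 1 \<Longrightarrow> (\<integral>\<omega>. (Y i \<omega>)\<^sup>2 \<partial>M) = v"
  unfolding Y_def v_def by (rule transfer_integral[of i "\<lambda>x. (x + a)\<^sup>2"]) auto

lemma v_nonneg: "v \<ge> 0" unfolding v_def by simp

end

context walk begin

definition XR :: "nat set \<Rightarrow> 'a \<Rightarrow> nat \<Rightarrow> real" where
  "XR A \<omega> = restrict (\<lambda>i. X i \<omega>) A"

lemma indep_XR: "A \<inter> B = {} \<Longrightarrow> A \<subseteq> {1..} \<Longrightarrow> B \<subseteq> {1..} \<Longrightarrow>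
  indep_var (PiM A (\<lambda>_. borel)) (XR A) (PiM B (\<lambda>_. borel)) (XR B)"
  unfolding XR_def by (rule indep_var_restrict[OF ind])

lemma XR_meas[measurable]: "A \<subseteq> {1..} \<Longrightarrow> XR A \<in> measurable M (PiM A (\<lambda>_. borel))"
  unfolding XR_def using Xm by (intro measurable_restrict) auto

lemma indep_block_prob:
  assumes "A \<inter> B = {}" "A \<subseteq> {1..}" "B \<subseteq> {1..}"
    and "Pa \<in> sets (PiM A (\<lambda>_. borel))" "Pb \<in> sets (PiM B (\<lambda>_. borel))"
  shows "prob {\<omega>\<in>space M. XR A \<omega> \<in> Pa \<and> XR B \<omega> \<in> Pb} =
         prob {\<omega>\<in>space M. XR A \<omega> \<in> Pa} * prob {\<omega>\<in>space M. XR B \<omega> \<in> Pb}"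
proof -
  have "prob ((\<lambda>x. (XR A x, XR B x)) -` (Pa \<times> Pb) \<inter> space M) =
    prob (XR A -` Pa \<inter> space M) * prob (XR B -` Pb \<inter> space M)"
    by (rule indep_varD[OF indep_XR[OF assms(1-3)] assms(4,5)])
  moreover have "(\<lambda>x. (XR A x, XR B x)) -` (Pa \<times> Pb) \<inter> space M = {\<omega>\<in>space M. XR A \<omega> \<in> Pa \<and> XR B \<omega> \<in> Pb}"
    "XR A -` Pa \<inter> space M = {\<omega>\<in>space M. XR A \<omega> \<in> Pa}"
    "XR B -` Pb \<inter> space M = {\<omega>\<in>space M. XR B \<omega> \<in> Pb}" by auto
  ultimately show ?thesis by simp
qed

lemma indep_block_integral:
  fixes f g :: "(nat \<Rightarrow> real) \<Rightarrow> real"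
  assumes "A \<inter> B = {}" "A \<subseteq> {1..}" "B \<subseteq> {1..}"
    and f: "f \<in> borel_measurable (PiM A (\<lambda>_. borel))" and g: "g \<in> borel_measurable (PiM B (\<lambda>_. borel))"
    and "integrable M (\<lambda>\<omega>. f (XR A \<omega>))" "integrable M (\<lambda>\<omega>. g (XR B \<omega>))"
  shows "(\<integral>\<omega>. f (XR A \<omega>) * g (XR B \<omega>) \<partial>M) = (\<integral>\<omega>. f (XR A \<omega>) \<partial>M) * (\<integral>\<omega>. g (XR B \<omega>) \<partial>M)"
    and "integrable M (\<lambda>\<omega>. f (XR A \<omega>) * g (XR B \<omega>))"
proof -
  have "indep_var borel (f \<circ> XR A) borel (g \<circ> XR B)"
    by (rule indep_var_compose[OF indep_XR[OF assms(1-3)] f g])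
  then have i: "indep_var borel (\<lambda>\<omega>. f (XR A \<omega>)) borel (\<lambda>\<omega>. g (XR B \<omega>))" by (simp add: comp_def)
  show "(\<integral>\<omega>. f (XR A \<omega>) * g (XR B \<omega>) \<partial>M) = (\<integral>\<omega>. f (XR A \<omega>) \<partial>M) * (\<integral>\<omega>. g (XR B \<omega>) \<partial>M)"
    by (rule indep_var_lebesgue_integral[OF i assms(6,7)])
  show "integrable M (\<lambda>\<omega>. f (XR A \<omega>) * g (XR B \<omega>))"
    by (rule indep_var_integrable[OF i assms(6,7)])
qed

definition T :: "nat \<Rightarrow> nat \<Rightarrow> 'a \<Rightarrow> real" where
  "T m k \<omega> = (\<Sum>i\<in>{m+1..m+k}. Y i \<omega>)"

lemma T_XR: "{m+1..m+k} \<subseteq> A \<Longrightarrow> T m k \<omega> = (\<Sum>i\<in>{m+1..m+k}. XR A \<omega> i + a)"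
  unfolding T_def XR_def Y_def by (intro sum.cong) auto

lemma T_fun_meas: "{m+1..m+k} \<subseteq> A \<Longrightarrow> (\<lambda>h. \<Sum>i\<in>{m+1..m+k}. h i + a) \<in> borel_measurable (PiM A (\<lambda>_. borel))"
  by (intro borel_measurable_sum borel_measurable_add measurable_component_singleton) auto

lemma T_meas[measurable]: "T m k \<in> borel_measurable M"
  unfolding T_def by (intro borel_measurable_sum Ym) auto

lemma T_Suc: "T m (Suc k) \<omega> = T m k \<omega> + Y (m + k + 1) \<omega>"
  unfolding T_def by (simp add: add.commute)

lemma T_moments: "integrable M (T m k) \<and> (\<integral>\<omega>. T m k \<omega> \<partial>M) = 0 \<and>
   integrable M (\<lambda>\<omega>. (T m k \<omega>)\<^sup>2) \<and> (\<integral>\<omega>. (T m k \<omega>)\<^sup>2 \<partial>M) = k * v"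
proof (induction k)
  case 0
  then show ?case by (simp add: T_def)
next
  case (Suc k)
  have iT: "integrable M (T m k)" and eT: "(\<integral>\<omega>. T m k \<omega> \<partial>M) = 0"
    and iT2: "integrable M (\<lambda>\<omega>. (T m k \<omega>)\<^sup>2)" and eT2: "(\<integral>\<omega>. (T m k \<omega>)\<^sup>2 \<partial>M) = k * v"
    using Suc by auto
  let ?A = "{m+1..m+k}" and ?B = "{m+k+1}"
  let ?f = "\<lambda>h. \<Sum>i\<in>{m+1..m+k}. h i + a" and ?g = "\<lambda>h::nat\<Rightarrow>real. h (m+k+1) + a"
  have fA: "\<And>\<omega>. ?f (XR ?A \<omega>) = T m k \<omega>" by (rule T_XR[symmetric]) auto
  have gB: "\<And>\<omega>. ?g (XR ?B \<omega>) = Y (m+k+1) \<omega>" by (simp add: XR_def Y_def)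
  have gm: "?g \<in> borel_measurable (PiM ?B (\<lambda>_. borel))"
    by (intro borel_measurable_add measurable_component_singleton) auto
  have ind1: "(\<integral>\<omega>. ?f (XR ?A \<omega>) * ?g (XR ?B \<omega>) \<partial>M) = (\<integral>\<omega>. ?f (XR ?A \<omega>) \<partial>M) * (\<integral>\<omega>. ?g (XR ?B \<omega>) \<partial>M)"
   and ind2: "integrable M (\<lambda>\<omega>. ?f (XR ?A \<omega>) * ?g (XR ?B \<omega>))"
  proof -
    have a1: "integrable M (\<lambda>\<omega>. ?f (XR ?A \<omega>))" unfolding fA by (rule iT)
    have a2: "integrable M (\<lambda>\<omega>. ?g (XR ?B \<omega>))" unfolding gB by (rule Y_int) simp
    show "(\<integral>\<omega>. ?f (XR ?A \<omega>) * ?g (XR ?B \<omega>) \<partial>M) = (\<integral>\<omega>. ?f (XR ?A \<omega>) \<partial>M) * (\<integral>\<omega>. ?g (XR ?B \<omega>) \<partial>M)"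
      by (rule indep_block_integral(1)[OF _ _ _ T_fun_meas gm a1 a2]) auto
    show "integrable M (\<lambda>\<omega>. ?f (XR ?A \<omega>) * ?g (XR ?B \<omega>))"
      by (rule indep_block_integral(2)[OF _ _ _ T_fun_meas gm a1 a2]) auto
  qed
  have cross_i: "integrable M (\<lambda>\<omega>. T m k \<omega> * Y (m+k+1) \<omega>)" using ind2 unfolding fA gB .
  have cross_e: "(\<integral>\<omega>. T m k \<omega> * Y (m+k+1) \<omega> \<partial>M) = 0" using ind1 unfolding fA gB eT by simp
  have sq: "\<And>\<omega>. (T m (Suc k) \<omega>)\<^sup>2 = (T m k \<omega>)\<^sup>2 + 2 * (T m k \<omega> * Y (m+k+1) \<omega>) + (Y (m+k+1) \<omega>)\<^sup>2"
    by (simp add: T_Suc power2_eq_square algebra_simps)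
  have iY2: "integrable M (\<lambda>\<omega>. (Y (m+k+1) \<omega>)\<^sup>2)" by (rule Y2_int) simp
  have i1: "integrable M (T m (Suc k))" unfolding T_Suc using iT Y_int[of "m+k+1"] by simp
  have e1: "(\<integral>\<omega>. T m (Suc k) \<omega> \<partial>M) = 0" unfolding T_Suc using iT Y_int[of "m+k+1"] eT Y_mean[of "m+k+1"] by simp
  have i2: "integrable M (\<lambda>\<omega>. (T m (Suc k) \<omega>)\<^sup>2)" unfolding sq using iT2 cross_i iY2 by simp
  have e2: "(\<integral>\<omega>. (T m (Suc k) \<omega>)\<^sup>2 \<partial>M) = Suc k * v" unfolding sq
    using iT2 cross_i iY2 eT2 cross_e Y2_mean[of "m+k+1"] by (simp add: algebra_simps)
  show ?case using i1 e1 i2 e2 by blast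
qed

end

context walk begin

lemma T_split: "k \<le> K \<Longrightarrow> T m K \<omega> = T m k \<omega> + T (m+k) (K-k) \<omega>"
proof -
  assume "k \<le> K"
  then have "{m+1..m+K} = {m+1..m+k} \<union> {m+k+1..m+k+(K-k)}" "{m+1..m+k} \<inter> {m+k+1..m+k+(K-k)} = {}"
    by auto
  then show ?thesis unfolding T_def by (simp add: sum.union_disjoint)
qed

lemma T_int: "integrable M (T m k)" and T_mean: "(\<integral>\<omega>. T m k \<omega> \<partial>M) = 0"
  and T2_int: "integrable M (\<lambda>\<omega>. (T m k \<omega>)\<^sup>2)" and T2_mean: "(\<integral>\<omega>. (T m k \<omega>)\<^sup>2 \<partial>M) = k * v"
  using T_moments by auto

definition tt :: "nat \<Rightarrow> nat \<Rightarrow> (nat \<Rightarrow> real) \<Rightarrow> real" where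
  "tt m j h = (\<Sum>i\<in>{m+1..m+j}. h i + a)"

lemma tt_meas: "{m+1..m+j} \<subseteq> A \<Longrightarrow> tt m j \<in> borel_measurable (PiM A (\<lambda>_. borel))"
  unfolding tt_def by (rule T_fun_meas)

lemma kolm_step:
  fixes m k K :: nat and lam :: real
  assumes k: "k \<le> K" and lam: "lam > 0"
  defines "Ak \<equiv> {\<omega>\<in>space M. lam \<le> \<bar>T m k \<omega>\<bar> \<and> (\<forall>j\<in>{1..<k}. \<bar>T m j \<omega>\<bar> < lam)}"
  shows "lam\<^sup>2 * prob Ak \<le> (\<integral>\<omega>. (T m K \<omega>)\<^sup>2 * indicator Ak \<omega> \<partial>M)"
proof -
  have Akm[measurable]: "Ak \<in> sets M" unfolding Ak_def by measurable
  let ?A = "{m+1..m+k}" and ?B = "{m+k+1..m+k+(K-k)}"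
  define f where "f h = (if lam \<le> \<bar>tt m k h\<bar> \<and> (\<forall>j\<in>{1..<k}. \<bar>tt m j h\<bar> < lam) then tt m k h else 0)" for h
  have fm: "f \<in> borel_measurable (PiM ?A (\<lambda>_. borel))"
  proof -
    let ?P = "PiM ?A (\<lambda>_. borel :: real measure)"
    have tm: "\<And>j. j \<le> k \<Longrightarrow> tt m j \<in> borel_measurable ?P"
      by (rule tt_meas) auto
    have s1: "\<And>j. j \<le> k \<Longrightarrow> {h\<in>space ?P. \<bar>tt m j h\<bar> < lam} \<in> sets ?P"
    proof -
      fix j assume "j \<le> k"
      note [measurable] = tm[OF this]
      show "{h\<in>space ?P. \<bar>tt m j h\<bar> < lam} \<in> sets ?P" by measurable
    qed
    have s2: "{h\<in>space ?P. lam \<le> \<bar>tt m k h\<bar>} \<in> sets ?P"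
    proof -
      note [measurable] = tm[OF order.refl]
      show ?thesis by measurable
    qed
    have "{h\<in>space ?P. lam \<le> \<bar>tt m k h\<bar> \<and> (\<forall>j\<in>{1..<k}. \<bar>tt m j h\<bar> < lam)} =
       {h\<in>space ?P. lam \<le> \<bar>tt m k h\<bar>} \<inter> (space ?P \<inter> (\<Inter>j\<in>{1..<k}. {h\<in>space ?P. \<bar>tt m j h\<bar> < lam}))"
      by auto
    also have "\<dots> \<in> sets ?P"
    proof (cases "{1..<k} = {}")
      case True then show ?thesis using s2 by simp
    next
      case False then show ?thesis using s1 s2 by (intro sets.Int sets.finite_INT sets.top) auto
    qed
    finally have s3: "{h\<in>space ?P. lam \<le> \<bar>tt m k h\<bar> \<and> (\<forall>j\<in>{1..<k}. \<bar>tt m j h\<bar> < lam)} \<in> sets ?P" .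
    show ?thesis unfolding f_def
      by (rule measurable_If[OF tm[OF order.refl] _ s3]) simp
  qed
  have ttT: "\<And>j \<omega>. j \<le> k \<Longrightarrow> tt m j (XR ?A \<omega>) = T m j \<omega>"
    unfolding tt_def by (rule T_XR[symmetric]) auto
  have fA: "\<And>\<omega>. \<omega> \<in> space M \<Longrightarrow> f (XR ?A \<omega>) = T m k \<omega> * indicator Ak \<omega>"
  proof -
    fix \<omega> assume \<omega>: "\<omega> \<in> space M"
    have eqs: "(\<forall>j\<in>{1..<k}. \<bar>tt m j (XR ?A \<omega>)\<bar> < lam) \<longleftrightarrow> (\<forall>j\<in>{1..<k}. \<bar>T m j \<omega>\<bar> < lam)"
      using ttT by auto
    show "f (XR ?A \<omega>) = T m k \<omega> * indicator Ak \<omega>"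
      unfolding f_def ttT[OF order.refl] eqs Ak_def indicator_def using \<omega> by auto
  qed
  have gB: "\<And>\<omega>. tt (m+k) (K-k) (XR ?B \<omega>) = T (m+k) (K-k) \<omega>"
    unfolding tt_def by (rule T_XR[symmetric]) auto
  have iTA: "integrable M (\<lambda>\<omega>. T m k \<omega> * indicator Ak \<omega>)"
    by (rule integrable_real_mult_indicator[OF Akm T_int])
  have a1: "integrable M (\<lambda>\<omega>. f (XR ?A \<omega>))"
    by (rule Bochner_Integration.integrable_cong[THEN iffD2, OF refl _ iTA]) (rule fA)
  have a2: "integrable M (\<lambda>\<omega>. tt (m+k) (K-k) (XR ?B \<omega>))" unfolding gB by (rule T_int)
  have gm: "tt (m+k) (K-k) \<in> borel_measurable (PiM ?B (\<lambda>_. borel))" by (rule tt_meas) auto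
  have e1: "(\<integral>\<omega>. f (XR ?A \<omega>) * tt (m+k) (K-k) (XR ?B \<omega>) \<partial>M) = (\<integral>\<omega>. f (XR ?A \<omega>) \<partial>M) * (\<integral>\<omega>. tt (m+k) (K-k) (XR ?B \<omega>) \<partial>M)"
    by (rule indep_block_integral(1)[OF _ _ _ fm gm a1 a2]) auto
  have e2: "integrable M (\<lambda>\<omega>. f (XR ?A \<omega>) * tt (m+k) (K-k) (XR ?B \<omega>))"
    by (rule indep_block_integral(2)[OF _ _ _ fm gm a1 a2]) auto
  let ?W = "T (m+k) (K-k)"
  have cross_i: "integrable M (\<lambda>\<omega>. (T m k \<omega> * indicator Ak \<omega>) * ?W \<omega>)"
    using e2 unfolding gB by (rule Bochner_Integration.integrable_cong[THEN iffD1, OF refl, rotated]) (simp only: fA)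
  have cross_e: "(\<integral>\<omega>. (T m k \<omega> * indicator Ak \<omega>) * ?W \<omega> \<partial>M) = 0"
  proof -
    have "(\<integral>\<omega>. (T m k \<omega> * indicator Ak \<omega>) * ?W \<omega> \<partial>M) = (\<integral>\<omega>. f (XR ?A \<omega>) * ?W \<omega> \<partial>M)"
      by (rule Bochner_Integration.integral_cong) (simp_all only: fA)
    also have "\<dots> = 0" using e1 unfolding gB T_mean by simp
    finally show ?thesis .
  qed
  have iTk2: "integrable M (\<lambda>\<omega>. (T m k \<omega>)\<^sup>2 * indicator Ak \<omega>)"
    by (rule integrable_real_mult_indicator[OF Akm T2_int])
  have iTK2: "integrable M (\<lambda>\<omega>. (T m K \<omega>)\<^sup>2 * indicator Ak \<omega>)"
    by (rule integrable_real_mult_indicator[OF Akm T2_int])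
  have "lam\<^sup>2 * prob Ak = (\<integral>\<omega>. lam\<^sup>2 * indicator Ak \<omega> \<partial>M)"
    using Akm by simp
  also have "\<dots> \<le> (\<integral>\<omega>. (T m k \<omega>)\<^sup>2 * indicator Ak \<omega> \<partial>M)"
  proof (rule integral_mono)
    show "integrable M (\<lambda>\<omega>. lam\<^sup>2 * indicator Ak \<omega>)" using Akm emeasure_finite by (simp add: less_top[symmetric])
    show "integrable M (\<lambda>\<omega>. (T m k \<omega>)\<^sup>2 * indicator Ak \<omega>)" by (rule iTk2)
    fix \<omega> assume "\<omega> \<in> space M"
    show "lam\<^sup>2 * indicator Ak \<omega> \<le> (T m k \<omega>)\<^sup>2 * indicator Ak \<omega>"
    proof (cases "\<omega> \<in> Ak")
      case True
      then have "lam \<le> \<bar>T m k \<omega>\<bar>" unfolding Ak_def by auto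
      then have "lam\<^sup>2 \<le> \<bar>T m k \<omega>\<bar>\<^sup>2" using lam by (intro power_mono) auto
      then show ?thesis using True by simp
    qed simp
  qed
  also have "\<dots> = (\<integral>\<omega>. (T m k \<omega>)\<^sup>2 * indicator Ak \<omega> + 2 * ((T m k \<omega> * indicator Ak \<omega>) * ?W \<omega>) \<partial>M)"
    using iTk2 cross_i cross_e by simp
  also have "\<dots> \<le> (\<integral>\<omega>. (T m K \<omega>)\<^sup>2 * indicator Ak \<omega> \<partial>M)"
  proof (rule integral_mono)
    show "integrable M (\<lambda>\<omega>. (T m k \<omega>)\<^sup>2 * indicator Ak \<omega> + 2 * ((T m k \<omega> * indicator Ak \<omega>) * ?W \<omega>))"
      using iTk2 cross_i by simp
    show "integrable M (\<lambda>\<omega>. (T m K \<omega>)\<^sup>2 * indicator Ak \<omega>)" by (rule iTK2)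
    fix \<omega> assume "\<omega> \<in> space M"
    have "(T m K \<omega>)\<^sup>2 = (T m k \<omega>)\<^sup>2 + 2 * (T m k \<omega> * ?W \<omega>) + (?W \<omega>)\<^sup>2"
      using T_split[OF k] by (simp add: power2_eq_square algebra_simps)
    then show "(T m k \<omega>)\<^sup>2 * indicator Ak \<omega> + 2 * ((T m k \<omega> * indicator Ak \<omega>) * ?W \<omega>) \<le> (T m K \<omega>)\<^sup>2 * indicator Ak \<omega>"
      by (simp add: indicator_def)
  qed
  finally show ?thesis .
qed

end

context walk begin

lemma kolmogorov:
  fixes m K :: nat and lam :: real
  assumes lam: "lam > 0"
  shows "prob {\<omega>\<in>space M. \<exists>k\<in>{1..K}. lam \<le> \<bar>T m k \<omega>\<bar>} \<le> K * v / lam\<^sup>2"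
proof -
  define Ak where "Ak k = {\<omega>\<in>space M. lam \<le> \<bar>T m k \<omega>\<bar> \<and> (\<forall>j\<in>{1..<k}. \<bar>T m j \<omega>\<bar> < lam)}" for k
  have Am[measurable]: "\<And>k. Ak k \<in> sets M" unfolding Ak_def by measurable
  have un: "{\<omega>\<in>space M. \<exists>k\<in>{1..K}. lam \<le> \<bar>T m k \<omega>\<bar>} = (\<Union>k\<in>{1..K}. Ak k)"
  proof
    show "(\<Union>k\<in>{1..K}. Ak k) \<subseteq> {\<omega>\<in>space M. \<exists>k\<in>{1..K}. lam \<le> \<bar>T m k \<omega>\<bar>}"
      unfolding Ak_def by auto
    show "{\<omega>\<in>space M. \<exists>k\<in>{1..K}. lam \<le> \<bar>T m k \<omega>\<bar>} \<subseteq> (\<Union>k\<in>{1..K}. Ak k)"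
    proof
      fix \<omega> assume "\<omega> \<in> {\<omega>\<in>space M. \<exists>k\<in>{1..K}. lam \<le> \<bar>T m k \<omega>\<bar>}"
      then obtain k where \<omega>: "\<omega> \<in> space M" and k: "k \<in> {1..K}" "lam \<le> \<bar>T m k \<omega>\<bar>" by auto
      define k0 where "k0 = (LEAST k. 1 \<le> k \<and> lam \<le> \<bar>T m k \<omega>\<bar>)"
      have P: "1 \<le> k0 \<and> lam \<le> \<bar>T m k0 \<omega>\<bar>" unfolding k0_def
        by (rule LeastI[of _ k]) (use k in auto)
      have le: "k0 \<le> k" unfolding k0_def by (rule Least_le) (use k in auto)
      have "\<forall>j\<in>{1..<k0}. \<bar>T m j \<omega>\<bar> < lam"
      proof
        fix j assume j: "j \<in> {1..<k0}"
        then have "\<not> (1 \<le> j \<and> lam \<le> \<bar>T m j \<omega>\<bar>)" unfolding k0_def by (intro not_less_Least) auto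
        then show "\<bar>T m j \<omega>\<bar> < lam" using j by auto
      qed
      then have "\<omega> \<in> Ak k0" using P \<omega> unfolding Ak_def by auto
      moreover have "k0 \<in> {1..K}" using P le k by auto
      ultimately show "\<omega> \<in> (\<Union>k\<in>{1..K}. Ak k)" by auto
    qed
  qed
  have disj_pt: "\<And>k1 k2 \<omega>. k1 < k2 \<Longrightarrow> 1 \<le> k1 \<Longrightarrow> \<omega> \<in> Ak k1 \<Longrightarrow> \<omega> \<notin> Ak k2"
  proof -
    fix k1 k2 \<omega> assume k: "k1 < k2" "1 \<le> k1" and w: "\<omega> \<in> Ak k1"
    have "k1 \<in> {1..<k2}" using k by auto
    then show "\<omega> \<notin> Ak k2" using w unfolding Ak_def by force
  qed
  have disj: "disjoint_family_on Ak {1..K}"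
    unfolding disjoint_family_on_def
  proof (intro ballI impI)
    fix k1 k2 assume k: "k1 \<in> {1..K}" "k2 \<in> {1..K}" "k1 \<noteq> k2"
    show "Ak k1 \<inter> Ak k2 = {}"
    proof (cases "k1 < k2")
      case True then show ?thesis using disj_pt[of k1 k2] k by auto
    next
      case False then have "k2 < k1" using k by auto
      then show ?thesis using disj_pt[of k2 k1] k by auto
    qed
  qed
  have pun: "prob (\<Union>k\<in>{1..K}. Ak k) = (\<Sum>k\<in>{1..K}. prob (Ak k))"
    by (rule measure_finite_Union[OF _ _ disj]) (auto simp: emeasure_finite)
  have sum_ind: "\<And>\<omega>. (\<Sum>k\<in>{1..K}. indicator (Ak k) \<omega>) \<le> (1::real)"
  proof -
    fix \<omega>
    show "(\<Sum>k\<in>{1..K}. indicator (Ak k) \<omega>) \<le> (1::real)"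
    proof (cases "\<exists>k0\<in>{1..K}. \<omega> \<in> Ak k0")
      case True
      then obtain k0 where k0: "k0 \<in> {1..K}" "\<omega> \<in> Ak k0" by auto
      have "(\<Sum>k\<in>{1..K}. indicator (Ak k) \<omega>) = (\<Sum>k\<in>{1..K}. if k = k0 then 1 else (0::real))"
      proof (rule sum.cong)
        fix k assume k: "k \<in> {1..K}"
        show "indicator (Ak k) \<omega> = (if k = k0 then 1 else (0::real))"
        proof (cases "k = k0")
          case False
          then have "\<omega> \<notin> Ak k" using disj k k0 unfolding disjoint_family_on_def by blast
          then show ?thesis using False by simp
        qed (use k0 in simp)
      qed simp
      also have "\<dots> = 1" using k0 by simp
      finally show ?thesis by simp
    next
      case False
      then have "(\<Sum>k\<in>{1..K}. indicator (Ak k) \<omega>) = (0::real)" by (intro sum.neutral) auto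
      then show ?thesis by simp
    qed
  qed
  have "lam\<^sup>2 * prob {\<omega>\<in>space M. \<exists>k\<in>{1..K}. lam \<le> \<bar>T m k \<omega>\<bar>} = (\<Sum>k\<in>{1..K}. lam\<^sup>2 * prob (Ak k))"
    unfolding un pun by (simp add: sum_distrib_left)
  also have "\<dots> \<le> (\<Sum>k\<in>{1..K}. \<integral>\<omega>. (T m K \<omega>)\<^sup>2 * indicator (Ak k) \<omega> \<partial>M)"
    by (intro sum_mono) (unfold Ak_def, rule kolm_step[OF _ lam], simp)
  also have "\<dots> = (\<integral>\<omega>. (\<Sum>k\<in>{1..K}. (T m K \<omega>)\<^sup>2 * indicator (Ak k) \<omega>) \<partial>M)"
    by (rule Bochner_Integration.integral_sum[symmetric]) (rule integrable_real_mult_indicator[OF Am T2_int])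
  also have "\<dots> \<le> (\<integral>\<omega>. (T m K \<omega>)\<^sup>2 \<partial>M)"
  proof (rule integral_mono)
    show "integrable M (\<lambda>\<omega>. \<Sum>k\<in>{1..K}. (T m K \<omega>)\<^sup>2 * indicator (Ak k) \<omega>)"
      by (intro Bochner_Integration.integrable_sum integrable_real_mult_indicator[OF Am T2_int])
    show "integrable M (\<lambda>\<omega>. (T m K \<omega>)\<^sup>2)" by (rule T2_int)
    fix \<omega>
    have "(\<Sum>k\<in>{1..K}. (T m K \<omega>)\<^sup>2 * indicator (Ak k) \<omega>) = (T m K \<omega>)\<^sup>2 * (\<Sum>k\<in>{1..K}. indicator (Ak k) \<omega>)"
      by (simp add: sum_distrib_left)
    also have "\<dots> \<le> (T m K \<omega>)\<^sup>2 * 1" by (intro mult_left_mono sum_ind) simp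
    finally show "(\<Sum>k\<in>{1..K}. (T m K \<omega>)\<^sup>2 * indicator (Ak k) \<omega>) \<le> (T m K \<omega>)\<^sup>2" by simp
  qed
  also have "\<dots> = K * v" by (rule T2_mean)
  finally show ?thesis using lam by (simp add: pos_le_divide_eq mult.commute)
qed

end

context walk begin

lemma S_meas[measurable]: "S X j \<in> borel_measurable M"
  unfolding S_def[abs_def] using Xm by (intro borel_measurable_sum) auto

lemma S_0[simp]: "S X 0 \<omega> = 0" unfolding S_def by simp

lemma tau_gt: "enat n < tau X \<omega> \<longleftrightarrow> (\<forall>j\<in>{1..n}. S X j \<omega> > 0)"
proof (cases "\<exists>n\<ge>1. S X n \<omega> \<le> 0")
  case True
  define L where "L = (LEAST n. n \<ge> 1 \<and> S X n \<omega> \<le> 0)"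
  have t: "tau X \<omega> = enat L" unfolding tau_def L_def using True by simp
  have L: "L \<ge> 1 \<and> S X L \<omega> \<le> 0" unfolding L_def using True by (metis (mono_tags, lifting) LeastI_ex)
  have nl: "\<And>j. j < L \<Longrightarrow> \<not> (j \<ge> 1 \<and> S X j \<omega> \<le> 0)" unfolding L_def by (rule not_less_Least)
  show ?thesis
  proof
    assume "enat n < tau X \<omega>"
    then have "n < L" using t by simp
    show "\<forall>j\<in>{1..n}. S X j \<omega> > 0"
    proof
      fix j assume "j \<in> {1..n}"
      then have "j < L" "j \<ge> 1" using \<open>n < L\<close> by auto
      then show "S X j \<omega> > 0" using nl[of j] by auto
    qed
  next
    assume a: "\<forall>j\<in>{1..n}. S X j \<omega> > 0"
    have "\<not> L \<le> n"
    proof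
      assume "L \<le> n" then have "S X L \<omega> > 0" using a L by auto
      then show False using L by simp
    qed
    then show "enat n < tau X \<omega>" using t by simp
  qed
next
  case False
  then have "tau X \<omega> = \<infinity>" unfolding tau_def by simp
  then show ?thesis using False by force
qed

lemma tau_inf: "tau X \<omega> = \<infinity> \<longleftrightarrow> (\<forall>j\<ge>1. S X j \<omega> > 0)"
proof -
  have "tau X \<omega> = \<infinity> \<longleftrightarrow> \<not> (\<exists>n\<ge>1. S X n \<omega> \<le> 0)" unfolding tau_def by simp
  also have "\<dots> \<longleftrightarrow> (\<forall>j\<ge>1. S X j \<omega> > 0)" by (meson not_le)
  finally show ?thesis .
qed

lemma tau_enat: "tau X \<omega> = enat t \<longleftrightarrow> (1 \<le> t \<and> S X t \<omega> \<le> 0 \<and> (\<forall>j\<in>{1..<t}. S X j \<omega> > 0))"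
proof
  assume t: "tau X \<omega> = enat t"
  then have ex: "\<exists>n\<ge>1. S X n \<omega> \<le> 0" unfolding tau_def by (auto split: if_splits)
  then have tl: "t = (LEAST n. n \<ge> 1 \<and> S X n \<omega> \<le> 0)" using t unfolding tau_def by simp
  have "t \<ge> 1 \<and> S X t \<omega> \<le> 0" unfolding tl using ex by (metis (mono_tags, lifting) LeastI_ex)
  moreover have "\<forall>j\<in>{1..<t}. S X j \<omega> > 0"
  proof
    fix j assume "j \<in> {1..<t}"
    then have "enat j < tau X \<omega>" using t by simp
    then show "S X j \<omega> > 0" using tau_gt[of j \<omega>] \<open>j \<in> {1..<t}\<close> by auto
  qed
  ultimately show "1 \<le> t \<and> S X t \<omega> \<le> 0 \<and> (\<forall>j\<in>{1..<t}. S X j \<omega> > 0)" by blast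
next
  assume a: "1 \<le> t \<and> S X t \<omega> \<le> 0 \<and> (\<forall>j\<in>{1..<t}. S X j \<omega> > 0)"
  then have ex: "\<exists>n\<ge>1. S X n \<omega> \<le> 0" by auto
  have "(LEAST n. n \<ge> 1 \<and> S X n \<omega> \<le> 0) = t"
  proof (rule Least_equality)
    show "1 \<le> t \<and> S X t \<omega> \<le> 0" using a by simp
    fix y assume "1 \<le> y \<and> S X y \<omega> \<le> 0"
    then show "t \<le> y" using a by (metis atLeastLessThan_iff not_le not_less)
  qed
  then show "tau X \<omega> = enat t" unfolding tau_def using ex by simp
qed

lemma A_tau_gt:
  assumes "x \<ge> 0"
  shows "x < A_tau X \<omega> \<longleftrightarrow> (\<exists>t. (1 \<le> t \<and> S X t \<omega> \<le> 0 \<and> (\<forall>j\<in>{1..<t}. S X j \<omega> > 0)) \<and> x < (\<Sum>k<t. S X k \<omega>))"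
proof (cases "tau X \<omega>")
  case (enat t)
  have "(\<exists>t'. (1 \<le> t' \<and> S X t' \<omega> \<le> 0 \<and> (\<forall>j\<in>{1..<t'}. S X j \<omega> > 0)) \<and> x < (\<Sum>k<t'. S X k \<omega>))
     \<longleftrightarrow> (\<exists>t'. tau X \<omega> = enat t' \<and> x < (\<Sum>k<t'. S X k \<omega>))" by (simp only: tau_enat)
  also have "\<dots> \<longleftrightarrow> x < (\<Sum>k<t. S X k \<omega>)" using enat by simp
  finally show ?thesis unfolding A_tau_def enat by simp
next
  case infinity
  then show ?thesis unfolding A_tau_def using assms tau_enat[of \<omega>] by auto
qed

lemma A_tau_sets: "x \<ge> 0 \<Longrightarrow> {\<omega>\<in>space M. x < A_tau X \<omega>} \<in> sets M"
  by (subst A_tau_gt) (auto, measurable)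

lemma tau_inf_sets[measurable]: "{\<omega>\<in>space M. tau X \<omega> = \<infinity>} \<in> sets M"
  unfolding tau_inf by measurable

lemma tau_gt_sets[measurable]: "{\<omega>\<in>space M. enat n < tau X \<omega>} \<in> sets M"
  unfolding tau_gt by measurable

lemma A_tau_lower:
  assumes fin: "tau X \<omega> \<noteq> \<infinity>" and pos: "\<forall>j\<in>{1..N}. S X j \<omega> > 0" and J: "J \<subseteq> {..N}"
  shows "(\<Sum>k\<in>J. S X k \<omega>) \<le> A_tau X \<omega>"
proof -
  obtain t where t: "tau X \<omega> = enat t" using fin by auto
  have "enat N < tau X \<omega>" using pos tau_gt by blast
  then have Nt: "N < t" using t by simp
  have nn: "\<And>k. k < t \<Longrightarrow> S X k \<omega> \<ge> 0"
  proof -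
    fix k assume "k < t"
    then have "enat k < tau X \<omega>" using t by simp
    then have "\<forall>j\<in>{1..k}. S X j \<omega> > 0" using tau_gt by blast
    then show "S X k \<omega> \<ge> 0"
    proof (cases "k = 0")
      case False
      then have "k \<in> {1..k}" by auto
      then show ?thesis using \<open>\<forall>j\<in>{1..k}. S X j \<omega> > 0\<close> by (meson less_imp_le)
    qed simp
  qed
  have "(\<Sum>k\<in>J. S X k \<omega>) \<le> (\<Sum>k<t. S X k \<omega>)"
    by (rule sum_mono2) (use J Nt nn in auto)
  also have "\<dots> = A_tau X \<omega>" unfolding A_tau_def t by simp
  finally show ?thesis .
qed

end


lemma sets_all_fin:
  assumes "finite I" "\<And>j. j \<in> I \<Longrightarrow> {h\<in>space P. Q j h} \<in> sets P"
  shows "{h\<in>space P. \<forall>j\<in>I. Q j h} \<in> sets P"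
proof -
  have eq: "{h\<in>space P. \<forall>j\<in>I. Q j h} = space P \<inter> (\<Inter>j\<in>I. {h\<in>space P. Q j h})" by auto
  show ?thesis unfolding eq
  proof (cases "I = {}")
    case True then show "space P \<inter> (\<Inter>j\<in>I. {h\<in>space P. Q j h}) \<in> sets P" by simp
  next
    case False then show "space P \<inter> (\<Inter>j\<in>I. {h\<in>space P. Q j h}) \<in> sets P"
      using assms by (intro sets.Int sets.finite_INT sets.top) auto
  qed
qed

lemma sets_conj:
  "{h\<in>space P. A h} \<in> sets P \<Longrightarrow> {h\<in>space P. B h} \<in> sets P \<Longrightarrow> {h\<in>space P. A h \<and> B h} \<in> sets P"
proof -
  assume "{h\<in>space P. A h} \<in> sets P" "{h\<in>space P. B h} \<in> sets P"
  moreover have "{h\<in>space P. A h \<and> B h} = {h\<in>space P. A h} \<inter> {h\<in>space P. B h}" by auto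
  ultimately show ?thesis by simp
qed

lemma comp_meas: "i \<in> A \<Longrightarrow> (\<lambda>h. h i) \<in> borel_measurable (PiM A (\<lambda>_. borel :: real measure))"
  by (rule measurable_component_singleton)

lemma sumcomp_meas: "B \<subseteq> A \<Longrightarrow> (\<lambda>h. \<Sum>i\<in>B. h i) \<in> borel_measurable (PiM A (\<lambda>_. borel :: real measure))"
  by (intro borel_measurable_sum comp_meas) auto

context walk begin

lemma tau_meas: "tau X \<in> measurable M (count_space UNIV)"
proof (subst measurable_count_space_eq_countable)
  show "countable (UNIV :: enat set)" by simp
  show "tau X \<in> space M \<rightarrow> UNIV \<and> (\<forall>e\<in>UNIV. tau X -` {e} \<inter> space M \<in> sets M)"
  proof (intro conjI ballI)
    fix e :: enat
    show "tau X -` {e} \<inter> space M \<in> sets M"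
    proof (cases e)
      case (enat t)
      have "tau X -` {e} \<inter> space M = {\<omega>\<in>space M. 1 \<le> t \<and> S X t \<omega> \<le> 0 \<and> (\<forall>j\<in>{1..<t}. S X j \<omega> > 0)}"
        using tau_enat enat by auto
      also have "\<dots> \<in> sets M" by measurable
      finally show ?thesis .
    next
      case infinity
      have "tau X -` {e} \<inter> space M = {\<omega>\<in>space M. tau X \<omega> = \<infinity>}" using infinity by auto
      then show ?thesis by simp
    qed
  qed simp
qed

lemma Etau: "(\<integral>\<^sup>+\<omega>. ennreal_of_enat (tau X \<omega>) \<partial>M) = (\<Sum>n. ennreal (prob {\<omega>\<in>space M. enat n < tau X \<omega>}))"
  unfolding nn_integral_enat_function[OF tau_meas] by (simp add: emeasure_eq_measure)

lemma T0_S: "T 0 n \<omega> = S X n \<omega> + n * a"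
  unfolding T_def S_def Y_def by (simp add: sum.distrib)

lemma tau_inf_null: "prob {\<omega>\<in>space M. tau X \<omega> = \<infinity>} = 0"
proof -
  let ?p = "prob {\<omega>\<in>space M. tau X \<omega> = \<infinity>}"
  have bnd: "?p \<le> v / (n * a\<^sup>2)" if n: "n \<ge> 1" for n :: nat
  proof -
    have pos: "n * a > 0" using n apos by simp
    have "{\<omega>\<in>space M. tau X \<omega> = \<infinity>} \<subseteq> {\<omega>\<in>space M. \<exists>k\<in>{1..n}. n * a \<le> \<bar>T 0 k \<omega>\<bar>}"
    proof safe
      fix \<omega> assume "\<omega> \<in> space M" "tau X \<omega> = \<infinity>"
      then have "S X n \<omega> > 0" using tau_inf n by auto
      then have "n * a \<le> \<bar>T 0 n \<omega>\<bar>" unfolding T0_S by simp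
      then show "\<exists>k\<in>{1..n}. n * a \<le> \<bar>T 0 k \<omega>\<bar>" using n by auto
    qed
    then have "?p \<le> prob {\<omega>\<in>space M. \<exists>k\<in>{1..n}. n * a \<le> \<bar>T 0 k \<omega>\<bar>}"
      by (intro finite_measure_mono) measurable
    also have "\<dots> \<le> n * v / (n * a)\<^sup>2" by (rule kolmogorov[OF pos])
    also have "\<dots> = v / (n * a\<^sup>2)" using n by (simp add: power2_eq_square)
    finally show ?thesis .
  qed
  show ?thesis
  proof (rule ccontr)
    assume "?p \<noteq> 0"
    then have pp: "?p > 0" using measure_nonneg[of M] by (simp add: less_le)
    obtain n :: nat where n: "v / (a\<^sup>2 * ?p) < n" using reals_Archimedean2 by blast
    have "0 \<le> v / (a\<^sup>2 * ?p)" using v_nonneg pp by simp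
    then have n1: "n \<ge> 1" using n by (cases n) auto
    have "v < n * (a\<^sup>2 * ?p)" using n pp apos by (simp add: divide_less_eq mult.commute)
    then have "v / (n * a\<^sup>2) < ?p" using n1 apos by (simp add: divide_less_eq mult.commute mult.left_commute)
    then show False using bnd[OF n1] by simp
  qed
qed

end

context walk begin

lemma XR_space: "A \<subseteq> {1..} \<Longrightarrow> \<omega> \<in> space M \<Longrightarrow> XR A \<omega> \<in> space (PiM A (\<lambda>_. borel))"
  using measurable_space[OF XR_meas] by blast

lemma prob_HJG:
  fixes n K :: nat and y lam :: real
  shows "prob {\<omega>\<in>space M. ((\<forall>j\<in>{1..n}. 0 < S X j \<omega>) \<and> (\<forall>j\<in>{1..n}. X j \<omega> \<le> y)) \<and>
                 (y < X (Suc n) \<omega> \<and> (\<forall>k\<in>{1..K}. \<bar>T (Suc n) k \<omega>\<bar> < lam))}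
     = prob {\<omega>\<in>space M. (\<forall>j\<in>{1..n}. 0 < S X j \<omega>) \<and> (\<forall>j\<in>{1..n}. X j \<omega> \<le> y)} *
       (prob {\<omega>\<in>space M. y < X (Suc n) \<omega>} * prob {\<omega>\<in>space M. \<forall>k\<in>{1..K}. \<bar>T (Suc n) k \<omega>\<bar> < lam})"
proof -
  define A1 where "A1 = {1..n}"
  define B1 where "B1 = {Suc n..Suc n + K}"
  define A2 where "A2 = {Suc n}"
  define B2 where "B2 = {Suc (Suc n)..Suc n + K}"
  let ?P = "\<lambda>A. PiM A (\<lambda>_. borel :: real measure)"
  define PH where "PH = {h\<in>space (?P A1). (\<forall>j\<in>{1..n}. 0 < (\<Sum>i\<in>{1..j}. h i)) \<and> (\<forall>j\<in>{1..n}. h j \<le> y)}"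
  define PJG where "PJG = {h\<in>space (?P B1). y < h (Suc n) \<and> (\<forall>k\<in>{1..K}. \<bar>tt (Suc n) k h\<bar> < lam)}"
  define PJ where "PJ = {h\<in>space (?P A2). y < h (Suc n)}"
  define PG where "PG = {h\<in>space (?P B2). (\<forall>k\<in>{1..K}. \<bar>tt (Suc n) k h\<bar> < lam)}"
  have PHs: "PH \<in> sets (?P A1)" unfolding PH_def
  proof (intro sets_conj sets_all_fin)
    fix j assume j: "j \<in> {1..n}"
    have [measurable]: "(\<lambda>h. \<Sum>i\<in>{1..j}. h i) \<in> borel_measurable (?P A1)"
      by (rule sumcomp_meas) (use j in \<open>auto simp: A1_def\<close>)
    have [measurable]: "(\<lambda>h. h j) \<in> borel_measurable (?P A1)"
      by (rule comp_meas) (use j in \<open>auto simp: A1_def\<close>)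
    show "{h\<in>space (?P A1). 0 < (\<Sum>i\<in>{1..j}. h i)} \<in> sets (?P A1)" by measurable
    show "{h\<in>space (?P A1). h j \<le> y} \<in> sets (?P A1)" by measurable
  qed auto
  have ttm: "\<And>k B. {Suc (Suc n)..Suc n + k} \<subseteq> B \<Longrightarrow> tt (Suc n) k \<in> borel_measurable (?P B)"
    by (rule tt_meas) auto
  have PGs: "PG \<in> sets (?P B2)" unfolding PG_def
  proof (intro sets_all_fin)
    fix k assume k: "k \<in> {1..K}"
    have [measurable]: "tt (Suc n) k \<in> borel_measurable (?P B2)"
      by (rule ttm) (use k in \<open>auto simp: B2_def\<close>)
    show "{h\<in>space (?P B2). \<bar>tt (Suc n) k h\<bar> < lam} \<in> sets (?P B2)" by measurable
  qed auto
  have PJs: "PJ \<in> sets (?P A2)" unfolding PJ_def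
  proof -
    have [measurable]: "(\<lambda>h. h (Suc n)) \<in> borel_measurable (?P A2)" by (rule comp_meas) (simp add: A2_def)
    show "{h\<in>space (?P A2). y < h (Suc n)} \<in> sets (?P A2)" by measurable
  qed
  have PJGs: "PJG \<in> sets (?P B1)" unfolding PJG_def
  proof (intro sets_conj sets_all_fin)
    have [measurable]: "(\<lambda>h. h (Suc n)) \<in> borel_measurable (?P B1)" by (rule comp_meas) (simp add: B1_def)
    show "{h\<in>space (?P B1). y < h (Suc n)} \<in> sets (?P B1)" by measurable
    fix k assume k: "k \<in> {1..K}"
    have [measurable]: "tt (Suc n) k \<in> borel_measurable (?P B1)"
      by (rule ttm) (use k in \<open>auto simp: B1_def\<close>)
    show "{h\<in>space (?P B1). \<bar>tt (Suc n) k h\<bar> < lam} \<in> sets (?P B1)" by measurable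
  qed auto
  have sub: "A1 \<subseteq> {1..}" "B1 \<subseteq> {1..}" "A2 \<subseteq> {1..}" "B2 \<subseteq> {1..}"
    by (auto simp: A1_def B1_def A2_def B2_def)
  have dis: "A1 \<inter> B1 = {}" "A2 \<inter> B2 = {}" by (auto simp: A1_def B1_def A2_def B2_def)
  have ttB1: "\<And>\<omega> k. k \<le> K \<Longrightarrow> tt (Suc n) k (XR B1 \<omega>) = T (Suc n) k \<omega>"
    unfolding tt_def by (rule T_XR[symmetric]) (auto simp: B1_def)
  have ttB2: "\<And>\<omega> k. k \<le> K \<Longrightarrow> tt (Suc n) k (XR B2 \<omega>) = T (Suc n) k \<omega>"
    unfolding tt_def by (rule T_XR[symmetric]) (auto simp: B2_def)
  have eH: "\<And>\<omega>. \<omega> \<in> space M \<Longrightarrow> XR A1 \<omega> \<in> PH \<longleftrightarrow> ((\<forall>j\<in>{1..n}. 0 < S X j \<omega>) \<and> (\<forall>j\<in>{1..n}. X j \<omega> \<le> y))"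
  proof -
    fix \<omega> assume w: "\<omega> \<in> space M"
    have s: "\<And>j. j \<in> {1..n} \<Longrightarrow> (\<Sum>i\<in>{1..j}. XR A1 \<omega> i) = S X j \<omega>"
      unfolding S_def XR_def A1_def by (intro sum.cong) auto
    have c: "\<And>j. j \<in> {1..n} \<Longrightarrow> XR A1 \<omega> j = X j \<omega>" unfolding XR_def A1_def by auto
    show "XR A1 \<omega> \<in> PH \<longleftrightarrow> ((\<forall>j\<in>{1..n}. 0 < S X j \<omega>) \<and> (\<forall>j\<in>{1..n}. X j \<omega> \<le> y))"
      unfolding PH_def using XR_space[OF sub(1) w] s c by auto
  qed
  have eJG: "\<And>\<omega>. \<omega> \<in> space M \<Longrightarrow> XR B1 \<omega> \<in> PJG \<longleftrightarrow> (y < X (Suc n) \<omega> \<and> (\<forall>k\<in>{1..K}. \<bar>T (Suc n) k \<omega>\<bar> < lam))"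
  proof -
    fix \<omega> assume w: "\<omega> \<in> space M"
    have c: "XR B1 \<omega> (Suc n) = X (Suc n) \<omega>" unfolding XR_def B1_def by auto
    show "XR B1 \<omega> \<in> PJG \<longleftrightarrow> (y < X (Suc n) \<omega> \<and> (\<forall>k\<in>{1..K}. \<bar>T (Suc n) k \<omega>\<bar> < lam))"
      unfolding PJG_def using XR_space[OF sub(2) w] c ttB1 by auto
  qed
  have eJ: "\<And>\<omega>. \<omega> \<in> space M \<Longrightarrow> XR A2 \<omega> \<in> PJ \<longleftrightarrow> y < X (Suc n) \<omega>"
  proof -
    fix \<omega> assume w: "\<omega> \<in> space M"
    have c: "XR A2 \<omega> (Suc n) = X (Suc n) \<omega>" unfolding XR_def A2_def by auto
    show "XR A2 \<omega> \<in> PJ \<longleftrightarrow> y < X (Suc n) \<omega>"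
      unfolding PJ_def using XR_space[OF sub(3) w] c by auto
  qed
  have eG: "\<And>\<omega>. \<omega> \<in> space M \<Longrightarrow> XR B2 \<omega> \<in> PG \<longleftrightarrow> (\<forall>k\<in>{1..K}. \<bar>T (Suc n) k \<omega>\<bar> < lam)"
  proof -
    fix \<omega> assume w: "\<omega> \<in> space M"
    show "XR B2 \<omega> \<in> PG \<longleftrightarrow> (\<forall>k\<in>{1..K}. \<bar>T (Suc n) k \<omega>\<bar> < lam)"
      unfolding PG_def using XR_space[OF sub(4) w] ttB2 by auto
  qed
  have p1: "prob {\<omega>\<in>space M. XR A1 \<omega> \<in> PH \<and> XR B1 \<omega> \<in> PJG} = prob {\<omega>\<in>space M. XR A1 \<omega> \<in> PH} * prob {\<omega>\<in>space M. XR B1 \<omega> \<in> PJG}"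
    by (rule indep_block_prob[OF dis(1) sub(1,2) PHs PJGs])
  have p2: "prob {\<omega>\<in>space M. XR A2 \<omega> \<in> PJ \<and> XR B2 \<omega> \<in> PG} = prob {\<omega>\<in>space M. XR A2 \<omega> \<in> PJ} * prob {\<omega>\<in>space M. XR B2 \<omega> \<in> PG}"
    by (rule indep_block_prob[OF dis(2) sub(3,4) PJs PGs])
  have q1: "{\<omega>\<in>space M. XR A1 \<omega> \<in> PH \<and> XR B1 \<omega> \<in> PJG} = {\<omega>\<in>space M. ((\<forall>j\<in>{1..n}. 0 < S X j \<omega>) \<and> (\<forall>j\<in>{1..n}. X j \<omega> \<le> y)) \<and>
                 (y < X (Suc n) \<omega> \<and> (\<forall>k\<in>{1..K}. \<bar>T (Suc n) k \<omega>\<bar> < lam))}"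
    using eH eJG by blast
  have q2: "{\<omega>\<in>space M. XR A1 \<omega> \<in> PH} = {\<omega>\<in>space M. (\<forall>j\<in>{1..n}. 0 < S X j \<omega>) \<and> (\<forall>j\<in>{1..n}. X j \<omega> \<le> y)}"
    using eH by blast
  have q3: "{\<omega>\<in>space M. XR B1 \<omega> \<in> PJG} = {\<omega>\<in>space M. XR A2 \<omega> \<in> PJ \<and> XR B2 \<omega> \<in> PG}"
    using eJG eJ eG by blast
  have q4: "{\<omega>\<in>space M. XR A2 \<omega> \<in> PJ} = {\<omega>\<in>space M. y < X (Suc n) \<omega>}" using eJ by blast
  have q5: "{\<omega>\<in>space M. XR B2 \<omega> \<in> PG} = {\<omega>\<in>space M. \<forall>k\<in>{1..K}. \<bar>T (Suc n) k \<omega>\<bar> < lam}" using eG by blast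
  show ?thesis using p1 p2 unfolding q1 q2 q3 q4 q5 by simp
qed

end


lemma gauss2: "2 * (\<Sum>k\<le>K. (z - real k * a)) = (real K + 1) * (2 * z - real K * a)"
  by (induction K) (auto simp: algebra_simps)

lemma gauss_lb:
  fixes z a :: real
  assumes z: "z \<ge> 0" and a: "a > 0"
  shows "z\<^sup>2 / (2 * a) \<le> (\<Sum>k\<le>nat \<lfloor>z / a\<rfloor>. (z - real k * a))"
proof -
  define K where "K = nat \<lfloor>z / a\<rfloor>"
  define q where "q = z / a"
  have q0: "q \<ge> 0" using z a by (simp add: q_def)
  have Kq: "real K \<le> q" "q < real K + 1" unfolding K_def q_def using q0 q_def
    by (auto simp: of_nat_nat)
  define d where "d = q - real K"
  have d: "0 \<le> d" "d \<le> 1" using Kq by (auto simp: d_def)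
  have zq: "z = a * q" using a by (simp add: q_def)
  have id: "(real K + 1) * (2 * q - real K) - q\<^sup>2 = real K + d * (2 - d)"
    by (simp add: d_def power2_eq_square algebra_simps)
  have "d * (2 - d) \<ge> 0" using d by simp
  then have key: "q\<^sup>2 \<le> (real K + 1) * (2 * q - real K)" using id by simp
  have "z\<^sup>2 / (2 * a) = a * q\<^sup>2 / 2" using a by (simp add: zq power2_eq_square)
  also have "\<dots> \<le> a * ((real K + 1) * (2 * q - real K)) / 2" using key a by simp
  also have "\<dots> = (real K + 1) * (2 * z - real K * a) / 2" by (simp add: zq algebra_simps)
  also have "\<dots> = (\<Sum>k\<le>K. (z - real k * a))" using gauss2[of z a K] by simp
  finally show ?thesis unfolding K_def .
qed

context walk begin

lemma S_T: "S X (m + k) \<omega> = S X m \<omega> + T m k \<omega> - real k * a"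
proof (induction k)
  case 0 then show ?case by (simp add: T_def)
next
  case (Suc k)
  have "S X (m + Suc k) \<omega> = S X (m + k) \<omega> + X (m + k + 1) \<omega>"
    unfolding S_def by simp
  then show ?case using Suc by (simp add: T_Suc Y_def algebra_simps)
qed

end

context walk begin

lemma main_bound:
  fixes x lam :: real and N :: nat
  assumes x: "x > 0" and lam: "lam > 0"
    and dl: "real (nat \<lfloor>sqrt (2*a*x) / a\<rfloor>) * v / lam\<^sup>2 \<le> 1"
  shows "Fbar M X (sqrt (2*a*x) + lam) * (1 - real (nat \<lfloor>sqrt (2*a*x) / a\<rfloor>) * v / lam\<^sup>2) *
           ((\<Sum>n<N. prob {\<omega>\<in>space M. enat n < tau X \<omega>}) - real N ^ 2 * Fbar M X (sqrt (2*a*x) + lam))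
         \<le> prob {\<omega>\<in>space M. x < A_tau X \<omega>}"
proof -
  define z where "z = sqrt (2*a*x)"
  define y where "y = z + lam"
  define K where "K = nat \<lfloor>z / a\<rfloor>"
  define \<delta> where "\<delta> = real K * v / lam\<^sup>2"
  define F where "F = Fbar M X y"
  define p where "p n = prob {\<omega>\<in>space M. enat n < tau X \<omega>}" for n
  have z0: "z \<ge> 0" unfolding z_def using apos x by simp
  have zz: "z\<^sup>2 / (2 * a) = x" unfolding z_def using apos x by simp
  have Ka: "real K * a \<le> z"
  proof -
    have "real K \<le> z / a" unfolding K_def using z0 apos by (simp add: of_nat_nat)
    then show ?thesis using apos by (simp add: pos_le_divide_eq)
  qed
  have F0: "F \<ge> 0" unfolding F_def Fbar_def by simp
  have d1: "1 - \<delta> \<ge> 0" using dl unfolding \<delta>_def K_def z_def by simp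
  define Hc where "Hc n \<omega> = ((\<forall>j\<in>{1..n}. 0 < S X j \<omega>) \<and> (\<forall>j\<in>{1..n}. X j \<omega> \<le> y))" for n \<omega>
  define Gc where "Gc n \<omega> = (\<forall>k\<in>{1..K}. \<bar>T (Suc n) k \<omega>\<bar> < lam)" for n \<omega>
  define En where "En n = {\<omega>\<in>space M. Hc n \<omega> \<and> (y < X (Suc n) \<omega> \<and> Gc n \<omega>)}" for n
  have XSm[measurable]: "X (Suc n) \<in> borel_measurable M" for n using Xm by auto
  have Hs[measurable]: "{\<omega>\<in>space M. Hc n \<omega>} \<in> sets M" for n
    unfolding Hc_def
  proof (intro sets_conj sets_all_fin)
    fix j assume j: "j \<in> {1..n}"
    then have [measurable]: "X j \<in> borel_measurable M" using Xm by auto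
    show "{\<omega>\<in>space M. X j \<omega> \<le> y} \<in> sets M" by measurable
    show "{\<omega>\<in>space M. 0 < S X j \<omega>} \<in> sets M" by measurable
  qed auto
  have Gs[measurable]: "{\<omega>\<in>space M. Gc n \<omega>} \<in> sets M" for n
    unfolding Gc_def by measurable
  have Js[measurable]: "{\<omega>\<in>space M. y < X (Suc n) \<omega>} \<in> sets M" for n by measurable
  have Jsj: "{\<omega>\<in>space M. y < X j \<omega>} \<in> sets M" if "j \<ge> 1" for j
  proof -
    have [measurable]: "X j \<in> borel_measurable M" using Xm that by auto
    show ?thesis by measurable
  qed
  have Es: "En n \<in> sets M" for n
    unfolding En_def by (intro sets_conj Hs Js Gs)
  have incl: "x < A_tau X \<omega>" if w: "\<omega> \<in> En n" and fin: "tau X \<omega> \<noteq> \<infinity>" for n \<omega>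
  proof -
    have H: "\<forall>j\<in>{1..n}. 0 < S X j \<omega>" and J: "y < X (Suc n) \<omega>" and G: "\<forall>k\<in>{1..K}. \<bar>T (Suc n) k \<omega>\<bar> < lam"
      using w unfolding En_def Hc_def Gc_def by auto
    have Sn: "S X n \<omega> \<ge> 0"
    proof (cases "n = 0")
      case False then have "n \<in> {1..n}" by auto
      then show ?thesis using H by (meson less_imp_le)
    qed simp
    have S1: "S X (Suc n) \<omega> > y"
    proof -
      have "S X (Suc n) \<omega> = S X n \<omega> + X (Suc n) \<omega>" unfolding S_def by simp
      then show ?thesis using Sn J by simp
    qed
    have lowk: "S X (Suc n + k) \<omega> > z - real k * a" if k: "k \<le> K" for k
    proof -
      have "T (Suc n) k \<omega> > - lam"
      proof (cases "k = 0")
        case True then show ?thesis using lam by (simp add: T_def)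
      next
        case False then have "k \<in> {1..K}" using k by auto
        then show ?thesis using G by fastforce
      qed
      then show ?thesis using S_T[of "Suc n" k \<omega>] S1 unfolding y_def by simp
    qed
    have lowk0: "S X (Suc n + k) \<omega> > 0" if k: "k \<le> K" for k
    proof -
      have "real k * a \<le> real K * a" using k apos by simp
      then show ?thesis using lowk[OF k] Ka by simp
    qed
    have pos: "\<forall>j\<in>{1..Suc n + K}. S X j \<omega> > 0"
    proof
      fix j assume j: "j \<in> {1..Suc n + K}"
      show "S X j \<omega> > 0"
      proof (cases "j \<le> n")
        case True then show ?thesis using H j by auto
      next
        case False
        then have "j = Suc n + (j - Suc n)" "j - Suc n \<le> K" using j by auto
        then show ?thesis using lowk0[of "j - Suc n"] by metis
      qed
    qed
    have "x \<le> (\<Sum>k\<le>K. (z - real k * a))" using gauss_lb[OF z0 apos] zz unfolding K_def by simp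
    also have "\<dots> < (\<Sum>k\<le>K. S X (Suc n + k) \<omega>)"
    proof (rule sum_strict_mono)
      fix k assume "k \<in> {..K}"
      then show "z - real k * a < S X (Suc n + k) \<omega>" by (intro lowk) simp
    qed auto
    also have "\<dots> = (\<Sum>j\<in>(\<lambda>k. Suc n + k) ` {..K}. S X j \<omega>)"
      by (subst sum.reindex) (auto simp: inj_on_def)
    also have "\<dots> \<le> A_tau X \<omega>"
      by (rule A_tau_lower[OF fin pos]) auto
    finally show ?thesis .
  qed
  have disj: "disjoint_family_on En {..<N}"
    unfolding disjoint_family_on_def
  proof (intro ballI impI)
    have aux: "En n1 \<inter> En n2 = {}" if "n1 < n2" for n1 n2
    proof -
      have "Suc n1 \<in> {1..n2}" using that by auto
      then show ?thesis unfolding En_def Hc_def by force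
    qed
    fix n1 n2 assume "n1 \<in> {..<N}" "n2 \<in> {..<N}" "n1 \<noteq> n2"
    then show "En n1 \<inter> En n2 = {}"
      using aux[of n1 n2] aux[of n2 n1] by (cases "n1 < n2") auto
  qed
  have Ax: "{\<omega>\<in>space M. x < A_tau X \<omega>} \<in> sets M" using A_tau_sets x by simp
  have "prob (\<Union>n\<in>{..<N}. En n) \<le> prob ({\<omega>\<in>space M. x < A_tau X \<omega>} \<union> {\<omega>\<in>space M. tau X \<omega> = \<infinity>})"
  proof (rule finite_measure_mono)
    show "(\<Union>n\<in>{..<N}. En n) \<subseteq> {\<omega>\<in>space M. x < A_tau X \<omega>} \<union> {\<omega>\<in>space M. tau X \<omega> = \<infinity>}"
      using incl unfolding En_def by blast
    show "{\<omega>\<in>space M. x < A_tau X \<omega>} \<union> {\<omega>\<in>space M. tau X \<omega> = \<infinity>} \<in> sets M" using Ax by simp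
  qed
  also have "\<dots> \<le> prob {\<omega>\<in>space M. x < A_tau X \<omega>} + prob {\<omega>\<in>space M. tau X \<omega> = \<infinity>}"
    by (rule measure_Un_le) (use Ax in auto)
  also have "\<dots> = prob {\<omega>\<in>space M. x < A_tau X \<omega>}" using tau_inf_null by simp
  finally have up: "prob (\<Union>n\<in>{..<N}. En n) \<le> prob {\<omega>\<in>space M. x < A_tau X \<omega>}" .
  have pU: "prob (\<Union>n\<in>{..<N}. En n) = (\<Sum>n<N. prob (En n))"
    by (rule measure_finite_Union[OF _ _ disj]) (auto simp: Es emeasure_finite)
  have pE: "prob (En n) = prob {\<omega>\<in>space M. Hc n \<omega>} * (F * prob {\<omega>\<in>space M. Gc n \<omega>})" for n
  proof -
    have "prob (En n) = prob {\<omega>\<in>space M. Hc n \<omega>} * (prob {\<omega>\<in>space M. y < X (Suc n) \<omega>} * prob {\<omega>\<in>space M. Gc n \<omega>})"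
      unfolding En_def Hc_def Gc_def by (rule prob_HJG)
    moreover have "prob {\<omega>\<in>space M. y < X (Suc n) \<omega>} = F"
      unfolding F_def Fbar_def using transfer_prob[of "Suc n" y] by simp
    ultimately show ?thesis by simp
  qed
  have pG: "prob {\<omega>\<in>space M. Gc n \<omega>} \<ge> 1 - \<delta>" for n
  proof -
    have eq: "{\<omega>\<in>space M. Gc n \<omega>} = space M - {\<omega>\<in>space M. \<exists>k\<in>{1..K}. lam \<le> \<bar>T (Suc n) k \<omega>\<bar>}"
      unfolding Gc_def by (auto simp: not_le)
    have "prob {\<omega>\<in>space M. \<exists>k\<in>{1..K}. lam \<le> \<bar>T (Suc n) k \<omega>\<bar>} \<le> \<delta>"
      unfolding \<delta>_def by (rule kolmogorov[OF lam])
    moreover have "prob {\<omega>\<in>space M. Gc n \<omega>} = 1 - prob {\<omega>\<in>space M. \<exists>k\<in>{1..K}. lam \<le> \<bar>T (Suc n) k \<omega>\<bar>}"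
      unfolding eq by (rule prob_compl) measurable
    ultimately show ?thesis by simp
  qed
  have pH: "prob {\<omega>\<in>space M. Hc n \<omega>} \<ge> p n - real n * F" for n
  proof -
    let ?U = "\<Union>j\<in>{1..n}. {\<omega>\<in>space M. y < X j \<omega>}"
    have Us: "?U \<in> sets M"
    proof (rule sets.finite_UN)
      fix j assume "j \<in> {1..n}"
      then show "{\<omega>\<in>space M. y < X j \<omega>} \<in> sets M" by (intro Jsj) simp
    qed simp
    have sub: "{\<omega>\<in>space M. enat n < tau X \<omega>} \<subseteq> {\<omega>\<in>space M. Hc n \<omega>} \<union> ?U"
    proof
      fix \<omega> assume w: "\<omega> \<in> {\<omega>\<in>space M. enat n < tau X \<omega>}"
      then have sp: "\<omega> \<in> space M" and Sp: "\<forall>j\<in>{1..n}. 0 < S X j \<omega>" using tau_gt by auto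
      show "\<omega> \<in> {\<omega>\<in>space M. Hc n \<omega>} \<union> ?U"
      proof (cases "\<forall>j\<in>{1..n}. X j \<omega> \<le> y")
        case True then show ?thesis using sp Sp unfolding Hc_def by blast
      next
        case False
        then obtain j where "j \<in> {1..n}" "\<not> X j \<omega> \<le> y" by blast
        then show ?thesis using sp by (auto simp: not_le)
      qed
    qed
    have "p n \<le> prob ({\<omega>\<in>space M. Hc n \<omega>} \<union> ?U)"
      unfolding p_def by (rule finite_measure_mono[OF sub]) (intro sets.Un Hs Us)
    also have "\<dots> \<le> prob {\<omega>\<in>space M. Hc n \<omega>} + prob ?U"
      by (rule measure_Un_le[OF Hs Us])
    also have "prob ?U \<le> (\<Sum>j\<in>{1..n}. prob {\<omega>\<in>space M. y < X j \<omega>})"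
      by (rule measure_UNION_le) (simp_all add: Jsj)
    also have "(\<Sum>j\<in>{1..n}. prob {\<omega>\<in>space M. y < X j \<omega>}) = (\<Sum>j\<in>{1..n}. F)"
    proof (rule sum.cong)
      fix j assume "j \<in> {1..n}"
      then show "prob {\<omega>\<in>space M. y < X j \<omega>} = F" unfolding F_def Fbar_def
        using transfer_prob[of j y] by simp
    qed simp
    finally show ?thesis by simp
  qed
  have step: "(p n - real n * F) * (F * (1 - \<delta>)) \<le> prob (En n)" for n
  proof -
    have "(p n - real n * F) * (F * (1 - \<delta>)) \<le> prob {\<omega>\<in>space M. Hc n \<omega>} * (F * (1 - \<delta>))"
      by (rule mult_right_mono[OF pH]) (use F0 d1 in simp)
    also have "\<dots> \<le> prob {\<omega>\<in>space M. Hc n \<omega>} * (F * prob {\<omega>\<in>space M. Gc n \<omega>})"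
      by (intro mult_left_mono pG F0 measure_nonneg)
    finally show ?thesis using pE by simp
  qed
  have sumn: "(\<Sum>n<N. real n * F) \<le> real N ^ 2 * F"
  proof -
    have "(\<Sum>n<N. real n * F) \<le> (\<Sum>n<N. real N * F)" by (intro sum_mono mult_right_mono F0) auto
    then show ?thesis by (simp add: power2_eq_square)
  qed
  have "F * (1 - \<delta>) * ((\<Sum>n<N. p n) - real N ^ 2 * F) \<le> F * (1 - \<delta>) * (\<Sum>n<N. (p n - real n * F))"
    using sumn F0 d1 by (intro mult_left_mono) (auto simp: sum_subtractf)
  also have "\<dots> = (\<Sum>n<N. (p n - real n * F) * (F * (1 - \<delta>)))"
    by (simp add: sum_distrib_left sum_distrib_right mult_ac)
  also have "\<dots> \<le> (\<Sum>n<N. prob (En n))" by (intro sum_mono step)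
  also have "\<dots> \<le> prob {\<omega>\<in>space M. x < A_tau X \<omega>}" using up pU by simp
  finally show ?thesis unfolding F_def y_def \<delta>_def K_def z_def p_def .
qed

end

context walk begin

lemma Fbar_bound:
  assumes y: "y > 0"
  shows "Fbar M X y \<le> (\<integral>\<omega>. (X 1 \<omega>)\<^sup>2 \<partial>M) / y\<^sup>2"
proof -
  have [measurable]: "X 1 \<in> borel_measurable M" using Xm by simp
  have "Fbar M X y \<le> prob {\<omega>\<in>space M. y\<^sup>2 \<le> (X 1 \<omega>)\<^sup>2}"
    unfolding Fbar_def
  proof (rule finite_measure_mono)
    show "{\<omega>\<in>space M. y < X 1 \<omega>} \<subseteq> {\<omega>\<in>space M. y\<^sup>2 \<le> (X 1 \<omega>)\<^sup>2}"
      using y by (auto intro!: power_mono)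
  qed measurable
  also have "\<dots> \<le> (\<integral>\<omega>. (X 1 \<omega>)\<^sup>2 \<partial>M) / y\<^sup>2"
    by (rule integral_Markov_inequality_measure[OF int2]) (use y in auto)
  finally show ?thesis .
qed

lemma final:
  assumes eps: "\<epsilon> > 0" and c: "ennreal c < (\<integral>\<^sup>+ \<omega>. ennreal_of_enat (tau X \<omega>) \<partial>M)"
  shows "\<forall>\<^sub>F x in at_top. c * Fbar M X (sqrt (2 * a * x) + 1 * x powr (1/4 + \<epsilon>)) \<le> measure M {\<omega> \<in> space M. A_tau X \<omega> > x}"
proof (cases "c \<le> 0")
  case True
  show ?thesis
  proof (rule always_eventually, intro allI)
    fix x
    have "c * Fbar M X (sqrt (2 * a * x) + 1 * x powr (1/4 + \<epsilon>)) \<le> 0"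
      using True by (intro mult_nonpos_nonneg) (auto simp: Fbar_def)
    also have "\<dots> \<le> measure M {\<omega> \<in> space M. A_tau X \<omega> > x}" by simp
    finally show "c * Fbar M X (sqrt (2 * a * x) + 1 * x powr (1/4 + \<epsilon>)) \<le> measure M {\<omega> \<in> space M. A_tau X \<omega> > x}" .
  qed
next
  case False
  then have c0: "c > 0" by simp
  define p where "p n = prob {\<omega>\<in>space M. enat n < tau X \<omega>}" for n
  have "ennreal c < (SUP N. \<Sum>n<N. ennreal (p n))"
    using c unfolding Etau p_def by (simp add: suminf_eq_SUP)
  then obtain N where "ennreal c < (\<Sum>n<N. ennreal (p n))" by (auto simp: less_SUP_iff)
  then have "ennreal c < ennreal (\<Sum>n<N. p n)" by (simp add: p_def)
  then have cs: "c < (\<Sum>n<N. p n)" using c0 by (simp add: ennreal_less_iff)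
  define s where "s = (\<Sum>n<N. p n)"
  define m2 where "m2 = (\<integral>\<omega>. (X 1 \<omega>)\<^sup>2 \<partial>M)"
  define lam where "lam x = x powr (1/4 + \<epsilon>)" for x :: real
  define \<delta> where "\<delta> x = real (nat \<lfloor>sqrt (2*a*x) / a\<rfloor>) * v / (lam x)\<^sup>2" for x
  define F where "F x = Fbar M X (sqrt (2*a*x) + lam x)" for x
  have lam2: "(lam x)\<^sup>2 = x powr (1/2 + 2 * \<epsilon>)" if "x > 0" for x
    using that unfolding lam_def by (simp add: powr_powr[symmetric] power2_eq_square powr_add[symmetric])
  have lim0: "((\<lambda>x. x powr (- (2 * \<epsilon>))) \<longlongrightarrow> 0) at_top"
    by (rule tendsto_neg_powr) (use eps filterlim_ident in auto)
  have lim1: "((\<lambda>x. x powr (- (1/2 + 2 * \<epsilon>))) \<longlongrightarrow> 0) at_top"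
    by (rule tendsto_neg_powr) (use eps filterlim_ident in auto)
  have \<delta>0: "(\<delta> \<longlongrightarrow> 0) at_top"
  proof (rule tendsto_sandwich)
    show "\<forall>\<^sub>F x in at_top. 0 \<le> \<delta> x" unfolding \<delta>_def using v_nonneg by simp
    show "\<forall>\<^sub>F x in at_top. \<delta> x \<le> v * (sqrt (2*a) / a) * x powr (- (2 * \<epsilon>))"
      using eventually_gt_at_top[of 0]
    proof eventually_elim
      case (elim x)
      have Kb: "real (nat \<lfloor>sqrt (2*a*x) / a\<rfloor>) \<le> sqrt (2*a*x) / a"
        using apos elim by (simp add: of_nat_nat)
      have "\<delta> x \<le> sqrt (2*a*x) / a * v / (lam x)\<^sup>2"
        unfolding \<delta>_def using Kb v_nonneg by (intro divide_right_mono mult_right_mono) auto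
      also have "\<dots> = v * (sqrt (2*a) / a) * (sqrt x / x powr (1/2 + 2 * \<epsilon>))"
        using elim apos by (simp add: lam2 real_sqrt_mult)
      also have "sqrt x / x powr (1/2 + 2 * \<epsilon>) = x powr (- (2 * \<epsilon>))"
      proof -
        have "sqrt x / x powr (1/2 + 2 * \<epsilon>) = x powr (1/2) / x powr (1/2 + 2 * \<epsilon>)"
          using elim by (simp add: powr_half_sqrt)
        also have "\<dots> = x powr (1/2 - (1/2 + 2 * \<epsilon>))" by (rule powr_diff[symmetric])
        finally show ?thesis by simp
      qed
      finally show ?case .
    qed
    show "((\<lambda>x. 0) \<longlongrightarrow> 0) at_top" by simp
    show "((\<lambda>x. v * (sqrt (2*a) / a) * x powr (- (2 * \<epsilon>))) \<longlongrightarrow> 0) at_top"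
      using tendsto_mult_left[OF lim0, of "v * (sqrt (2*a) / a)"] by simp
  qed
  have F0: "(F \<longlongrightarrow> 0) at_top"
  proof (rule tendsto_sandwich)
    show "\<forall>\<^sub>F x in at_top. 0 \<le> F x" unfolding F_def Fbar_def by simp
    show "\<forall>\<^sub>F x in at_top. F x \<le> m2 * x powr (- (1/2 + 2 * \<epsilon>))"
      using eventually_gt_at_top[of 0]
    proof eventually_elim
      case (elim x)
      have l0: "lam x > 0" unfolding lam_def using elim by simp
      have yl: "lam x \<le> sqrt (2*a*x) + lam x" using apos elim by simp
      have m20: "m2 \<ge> 0" unfolding m2_def by simp
      have ypos: "sqrt (2*a*x) + lam x > 0" using l0 yl by linarith
      have "F x \<le> m2 / (sqrt (2*a*x) + lam x)\<^sup>2"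
        unfolding F_def m2_def by (rule Fbar_bound[OF ypos])
      also have "\<dots> \<le> m2 / (lam x)\<^sup>2"
      proof (rule divide_left_mono[OF _ m20])
        show "(lam x)\<^sup>2 \<le> (sqrt (2*a*x) + lam x)\<^sup>2" using yl l0 by (simp add: power_mono)
        show "0 < (sqrt (2*a*x) + lam x)\<^sup>2 * (lam x)\<^sup>2" using ypos l0 by simp
      qed
      also have "\<dots> = m2 * x powr (- (1/2 + 2 * \<epsilon>))"
        unfolding lam2[OF elim] by (simp only: powr_minus divide_inverse)
      finally show ?case .
    qed
    show "((\<lambda>x. 0) \<longlongrightarrow> 0) at_top" by simp
    show "((\<lambda>x. m2 * x powr (- (1/2 + 2 * \<epsilon>))) \<longlongrightarrow> 0) at_top"
      using tendsto_mult_left[OF lim1, of m2] by simp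
  qed
  have lim: "((\<lambda>x. (1 - \<delta> x) * (s - real N ^ 2 * F x)) \<longlongrightarrow> (1 - 0) * (s - real N ^ 2 * 0)) at_top"
    by (intro tendsto_intros \<delta>0 F0)
  then have ev1: "\<forall>\<^sub>F x in at_top. c < (1 - \<delta> x) * (s - real N ^ 2 * F x)"
    using cs unfolding s_def by (intro order_tendstoD(1)) auto
  have "\<forall>\<^sub>F x in at_top. \<delta> x < 1"
    using \<delta>0 by (rule order_tendstoD(2)) simp
  then have ev2: "\<forall>\<^sub>F x in at_top. \<delta> x \<le> 1" by eventually_elim simp
  show ?thesis
    using ev1 ev2 eventually_gt_at_top[of 0]
  proof eventually_elim
    case (elim x)
    have l0: "lam x > 0" unfolding lam_def using elim by simp
    have Fx: "F x \<ge> 0" unfolding F_def Fbar_def by simp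
    have "c * F x \<le> F x * ((1 - \<delta> x) * (s - real N ^ 2 * F x))"
    proof -
      have "c * F x \<le> ((1 - \<delta> x) * (s - real N ^ 2 * F x)) * F x"
        using elim(1) Fx by (intro mult_right_mono) auto
      then show ?thesis by (simp only: mult.commute)
    qed
    also have "\<dots> \<le> prob {\<omega>\<in>space M. x < A_tau X \<omega>}"
      using main_bound[OF elim(3) l0, of N] elim(2)
      unfolding F_def \<delta>_def s_def p_def by (simp add: mult.assoc)
    finally show ?case unfolding F_def lam_def by simp
  qed
qed

end

theorem mainTheorem7:
  fixes M :: "'a measure" and X :: "nat \<Rightarrow> 'a \<Rightarrow> real" and a :: real
  assumes "prob_space M"
    and "\<And>i. i \<ge> 1 \<Longrightarrow> X i \<in> borel_measurable M"
    and "prob_space.indep_vars M (\<lambda>_. borel) X {1..}"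
    and "\<And>i. i \<ge> 1 \<Longrightarrow> distr M borel (X i) = distr M borel (X 1)"
    and "integrable M (X 1)"
    and "a > 0"
    and "(\<integral>\<omega>. X 1 \<omega> \<partial>M) = - a"
    and "integrable M (\<lambda>\<omega>. (X 1 \<omega>)\<^sup>2)"
  shows "\<forall>\<epsilon>>0. \<exists>C>0. \<forall>c::real. ennreal c < (\<integral>\<^sup>+ \<omega>. ennreal_of_enat (tau X \<omega>) \<partial>M) \<longrightarrow>
           (\<forall>\<^sub>F x in at_top.
              c * Fbar M X (sqrt (2 * a * x) + C * x powr (1/4 + \<epsilon>))
                \<le> measure M {\<omega> \<in> space M. A_tau X \<omega> > x})"
proof -
  interpret W: walk M X a
  proof (rule walk.intro)
    show "prob_space M" by (rule assms(1))
    show "walk_axioms M X a"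
    proof (rule walk_axioms.intro)
      show "\<And>i. i \<ge> 1 \<Longrightarrow> X i \<in> borel_measurable M" by (rule assms(2))
      show "prob_space.indep_vars M (\<lambda>_. borel) X {1..}" by (rule assms(3))
      show "\<And>i. i \<ge> 1 \<Longrightarrow> distr M borel (X i) = distr M borel (X 1)" by (rule assms(4))
    qed (rule assms)+
  qed
  show ?thesis
  proof (intro allI impI)
    fix \<epsilon> :: real assume e: "\<epsilon> > 0"
    show "\<exists>C>0. \<forall>c::real. ennreal c < (\<integral>\<^sup>+ \<omega>. ennreal_of_enat (tau X \<omega>) \<partial>M) \<longrightarrow>
           (\<forall>\<^sub>F x in at_top.
              c * Fbar M X (sqrt (2 * a * x) + C * x powr (1/4 + \<epsilon>))
                \<le> measure M {\<omega> \<in> space M. A_tau X \<omega> > x})"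
      by (rule exI[of _ 1]) (use W.final[OF e] in auto)
  qed
qed


end
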